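(* Let $m,n\ge1$, $\delta\in\mathbb Z$ with $\delta\ne m$, $N=m+n$, and let $\omega_k=\omega_k(M^{\mathfrak p}(\underline\delta))$. Then $\omega_0=m+n$, $\omega_1=-\delta m+\frac{(m+n)^2}{2}$, and for $k\ge2$ $$\omega_k=(\beta_1+\beta_2)\omega_{k-1}-\beta_1\beta_2\omega_{k-2},\qquad \beta_1=-\delta+\tfrac{m+n}2,\ \beta_2=\tfrac{n-m}2.$$ Equivalently, $\sum_{k\ge0}\omega_ku^{-k}=\dfrac{\omega_0+(\omega_1-(\beta_1+\beta_2)\omega_0)u^{-1}}{1-(\beta_1+\beta_2)u^{-1}+\beta_1\beta_2u^{-2}}$.
   Context: $\mathfrak{gl}_N$ with matrix units $E_{ij}$, $\epsilon_i$ dual to $E_{ii}$, Borel of upper triangular matrices; $\mathfrak p$ the standard parabolic with Levi $\mathfrak{gl}_m\oplus\mathfrak{gl}_n$; $M^{\mathfrak p}(\lambda)=U(\mathfrak{gl}_N)\otimes_{U(\mathfrak p)}E(\lambda)$ the parabolic Verma module; $\underline\delta=-\delta(\epsilon_1+\cdots+\epsilon_m)$. $V=\mathbb C^N$ with basis $v_i$, $E_{ij}v_k=\delta_{jk}v_i$; $V^*$ with dual basis $v_i^*$, $E_{ij}v_k^*=-\delta_{ik}v_j^*$. $\Omega=\sum_{i,j}E_{ij}\otimes E_{ji}$; on $M\otimes V\otimes V^*$ (factors numbered $0,1,2$) $y_1=\Omega_{01}+\frac N2$, with $\Omega_{01}$ the action of $\Omega$ on factors $0,1$. For a highest weight module $M$,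 $\omega_k(M)$ is the scalar by which $M\to M\otimes V\otimes V^*\xrightarrow{y_1^k}M\otimes V\otimes V^*\to M$ acts, the first map $m\mapsto\sum_j m\otimes v_j\otimes v_j^*$, the last $m\otimes v_i\otimes v_j^*\mapsto\delta_{ij}m$. *)

theory Defs
  imports Complex_Main
begin

text \<open>A representation of gl_N on a complex vector space 'v (scalar multiplication sc):
  E i j is the action of the matrix unit E_ij, for 1 \<le> i,j \<le> N.\<close>
definition gl_rep :: "(complex \<Rightarrow> 'v::ab_group_add \<Rightarrow> 'v) \<Rightarrow> nat \<Rightarrow> (nat \<Rightarrow> nat \<Rightarrow> 'v \<Rightarrow> 'v) \<Rightarrow> bool" where
  "gl_rep sc N E \<longleftrightarrow> vector_space sc \<and>
     (\<forall>i\<in>{1..N}. \<forall>j\<in>{1..N}. Vector_Spaces.linear sc sc (E i j)) \<and>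
     (\<forall>i\<in>{1..N}. \<forall>j\<in>{1..N}. \<forall>k\<in>{1..N}. \<forall>l\<in>{1..N}. \<forall>x.
        E i j (E k l x) - E k l (E i j x)
          = (if j = k then E i l x else 0) - (if l = i then E k j x else 0))"

inductive_set orbit :: "nat \<Rightarrow> (nat \<Rightarrow> nat \<Rightarrow> 'v \<Rightarrow> 'v) \<Rightarrow> 'v \<Rightarrow> 'v set"
  for N E v where
  base: "v \<in> orbit N E v"
| step: "x \<in> orbit N E v \<Longrightarrow> i \<in> {1..N} \<Longrightarrow> j \<in> {1..N} \<Longrightarrow> E i j x \<in> orbit N E v"

definition generated_by :: "(complex \<Rightarrow> 'v::ab_group_add \<Rightarrow> 'v) \<Rightarrow> nat \<Rightarrow> (nat \<Rightarrow> nat \<Rightarrow> 'v \<Rightarrow> 'v) \<Rightarrow> 'v \<Rightarrow> bool" where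
  "generated_by sc N E v \<longleftrightarrow> module.span sc (orbit N E v) = UNIV"

text \<open>Standard parabolic p (Levi gl_m + gl_n, N = m+n): E_ij \<in> p iff not (i > m and j \<le> m).
  v spans a copy of the one-dimensional p-module E(lam) (lam constant on the two blocks):
  E_ii v = lam i v, E_ij v = 0 for i \<noteq> j with E_ij \<in> p.\<close>
definition parabolic_hw_vector :: "(complex \<Rightarrow> 'v::ab_group_add \<Rightarrow> 'v) \<Rightarrow> nat \<Rightarrow> nat \<Rightarrow> (nat \<Rightarrow> nat \<Rightarrow> 'v \<Rightarrow> 'v) \<Rightarrow> (nat \<Rightarrow> complex) \<Rightarrow> 'v \<Rightarrow> bool" where
  "parabolic_hw_vector sc m n E lam v \<longleftrightarrow>
     (\<forall>i\<in>{1..m+n}. E i i v = sc (lam i) v) \<and>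
     (\<forall>i\<in>{1..m+n}. \<forall>j\<in>{1..m+n}. i \<noteq> j \<and> \<not> (m < i \<and> j \<le> m) \<longrightarrow> E i j v = 0)"

text \<open>Elements of M \<otimes> V \<otimes> V* are represented by their components:
  t i j \<in> M is the coefficient of v_i \<otimes> v_j^*.\<close>
definition tensor_emb :: "nat \<Rightarrow> 'v::zero \<Rightarrow> nat \<Rightarrow> nat \<Rightarrow> 'v" where
  "tensor_emb N x = (\<lambda>i j. if i = j \<and> i \<in> {1..N} then x else 0)"

definition tensor_contr :: "nat \<Rightarrow> (nat \<Rightarrow> nat \<Rightarrow> 'v::comm_monoid_add) \<Rightarrow> 'v" where
  "tensor_contr N t = (\<Sum>i=1..N. t i i)"

text \<open>y_1 = Omega_01 + N/2; Omega_01 (x \<otimes> v_i \<otimes> v_j^*) = sum_b E_ib x \<otimes> v_b \<otimes> v_j^*.\<close>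
definition y1 :: "(complex \<Rightarrow> 'v::ab_group_add \<Rightarrow> 'v) \<Rightarrow> nat \<Rightarrow> (nat \<Rightarrow> nat \<Rightarrow> 'v \<Rightarrow> 'v)
                   \<Rightarrow> (nat \<Rightarrow> nat \<Rightarrow> 'v) \<Rightarrow> (nat \<Rightarrow> nat \<Rightarrow> 'v)" where
  "y1 sc N E t = (\<lambda>b j. (\<Sum>i=1..N. E i b (t i j)) + sc (of_nat N / 2) (t b j))"

text \<open>omega_k(M): the scalar by which M \<rightarrow> M\<otimes>V\<otimes>V* \<rightarrow> (y_1^k) \<rightarrow> M\<otimes>V\<otimes>V* \<rightarrow> M acts.\<close>
definition omega :: "(complex \<Rightarrow> 'v::ab_group_add \<Rightarrow> 'v) \<Rightarrow> nat \<Rightarrow> (nat \<Rightarrow> nat \<Rightarrow> 'v \<Rightarrow> 'v) \<Rightarrow> nat \<Rightarrow> complex" where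
  "omega sc N E k = (THE c. \<forall>x. tensor_contr N ((y1 sc N E ^^ k) (tensor_emb N x)) = sc c x)"

end

theory Submission
  imports Defs
begin

locale glr =
  fixes sc :: "complex \<Rightarrow> 'v::ab_group_add \<Rightarrow> 'v" and N :: nat and E :: "nat \<Rightarrow> nat \<Rightarrow> 'v \<Rightarrow> 'v"
  assumes vs: "vector_space sc"
    and lin: "\<And>i j. i \<in> {1..N} \<Longrightarrow> j \<in> {1..N} \<Longrightarrow> Vector_Spaces.linear sc sc (E i j)"
    and comm: "\<And>i j k l x. i \<in> {1..N} \<Longrightarrow> j \<in> {1..N} \<Longrightarrow> k \<in> {1..N} \<Longrightarrow> l \<in> {1..N} \<Longrightarrow>
        E i j (E k l x) - E k l (E i j x)
          = (if j = k then E i l x else 0) - (if l = i then E k j x else 0)"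
begin

sublocale vector_space sc by (rule vs)

lemma mh: "i \<in> {1..N} \<Longrightarrow> j \<in> {1..N} \<Longrightarrow> module_hom sc sc (E i j)"
  using lin by (simp add: module_hom_iff_linear)

lemma E_add: "i \<in> {1..N} \<Longrightarrow> j \<in> {1..N} \<Longrightarrow> E i j (x + y) = E i j x + E i j y"
  using mh module_hom.add by blast
lemma E_scale: "i \<in> {1..N} \<Longrightarrow> j \<in> {1..N} \<Longrightarrow> E i j (sc c x) = sc c (E i j x)"
  using mh module_hom.scale by blast
lemma E_zero: "i \<in> {1..N} \<Longrightarrow> j \<in> {1..N} \<Longrightarrow> E i j 0 = 0"
  using mh module_hom.zero by blast
lemma E_diff: "i \<in> {1..N} \<Longrightarrow> j \<in> {1..N} \<Longrightarrow> E i j (x - y) = E i j x - E i j y"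
  using mh module_hom.diff by blast
lemma E_neg: "i \<in> {1..N} \<Longrightarrow> j \<in> {1..N} \<Longrightarrow> E i j (- x) = - E i j x"
  using mh module_hom.neg by blast
lemma E_sum: "i \<in> {1..N} \<Longrightarrow> j \<in> {1..N} \<Longrightarrow> E i j (sum g A) = (\<Sum>a\<in>A. E i j (g a))"
  using mh module_hom.sum by blast

definition B :: "(nat \<Rightarrow> 'v) \<Rightarrow> nat \<Rightarrow> 'v" where
  "B u b = (\<Sum>i\<in>{1..N}. E i b (u i))"

definition D :: "nat \<Rightarrow> nat \<Rightarrow> (nat \<Rightarrow> 'v) \<Rightarrow> nat \<Rightarrow> 'v" where
  "D a b u = (\<lambda>i. E a b (u i) + (if i = a then u b else 0))"

definition P :: "complex \<Rightarrow> complex \<Rightarrow> (nat \<Rightarrow> 'v) \<Rightarrow> nat \<Rightarrow> 'v" where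
  "P \<alpha> \<gamma> u c = B (B u) c + sc \<alpha> (B u c) + sc \<gamma> (u c)"

lemma B_cong: "(\<And>i. i \<in> {1..N} \<Longrightarrow> u i = w i) \<Longrightarrow> B u b = B w b"
  unfolding B_def by (rule sum.cong) auto

lemma B_add: "b \<in> {1..N} \<Longrightarrow> B (\<lambda>i. u i + w i) b = B u b + B w b"
  unfolding B_def by (simp add: E_add sum.distrib)
lemma B_diff: "b \<in> {1..N} \<Longrightarrow> B (\<lambda>i. u i - w i) b = B u b - B w b"
  unfolding B_def by (simp add: E_diff sum_subtractf)
lemma B_scale: "b \<in> {1..N} \<Longrightarrow> B (\<lambda>i. sc c (u i)) b = sc c (B u b)"
  unfolding B_def by (simp add: E_scale scale_sum_right)
lemma B_zero: "b \<in> {1..N} \<Longrightarrow> B (\<lambda>i. 0) b = 0"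
  unfolding B_def by (simp add: E_zero)

lemma P_cong: "c \<in> {1..N} \<Longrightarrow> (\<And>i. i \<in> {1..N} \<Longrightarrow> u i = w i) \<Longrightarrow> P \<alpha> \<gamma> u c = P \<alpha> \<gamma> w c"
proof -
  assume c: "c \<in> {1..N}" and h: "\<And>i. i \<in> {1..N} \<Longrightarrow> u i = w i"
  have "B u i = B w i" for i using h by (rule B_cong)
  then have "B u = B w" by auto
  then show ?thesis unfolding P_def using h c by simp
qed

lemma Bfun_add: "i \<in> {1..N} \<Longrightarrow> B (\<lambda>i. u i + w i) i = (\<lambda>i. B u i + B w i) i"
  by (simp add: B_add)

lemma P_add: "c \<in> {1..N} \<Longrightarrow> P \<alpha> \<gamma> (\<lambda>i. u i + w i) c = P \<alpha> \<gamma> u c + P \<alpha> \<gamma> w c"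
proof -
  assume c: "c \<in> {1..N}"
  have "B (B (\<lambda>i. u i + w i)) c = B (\<lambda>i. B u i + B w i) c"
    by (rule B_cong) (simp add: B_add)
  also have "\<dots> = B (B u) c + B (B w) c" using c by (rule B_add)
  finally show ?thesis unfolding P_def using c by (simp add: B_add algebra_simps)
qed

lemma P_diff: "c \<in> {1..N} \<Longrightarrow> P \<alpha> \<gamma> (\<lambda>i. u i - w i) c = P \<alpha> \<gamma> u c - P \<alpha> \<gamma> w c"
proof -
  assume c: "c \<in> {1..N}"
  have "B (B (\<lambda>i. u i - w i)) c = B (\<lambda>i. B u i - B w i) c"
    by (rule B_cong) (simp add: B_diff)
  also have "\<dots> = B (B u) c - B (B w) c" using c by (rule B_diff)
  finally show ?thesis unfolding P_def using c by (simp add: B_diff algebra_simps)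
qed

lemma P_scale: "c \<in> {1..N} \<Longrightarrow> P \<alpha> \<gamma> (\<lambda>i. sc k (u i)) c = sc k (P \<alpha> \<gamma> u c)"
proof -
  assume c: "c \<in> {1..N}"
  have "B (B (\<lambda>i. sc k (u i))) c = B (\<lambda>i. sc k (B u i)) c"
    by (rule B_cong) (simp add: B_scale)
  also have "\<dots> = sc k (B (B u) c)" using c by (rule B_scale)
  finally show ?thesis unfolding P_def using c by (simp add: B_scale algebra_simps scale_left_commute)
qed

lemma P_zero: "c \<in> {1..N} \<Longrightarrow> P \<alpha> \<gamma> (\<lambda>i. 0) c = 0"
proof -
  assume c: "c \<in> {1..N}"
  have "B (B (\<lambda>i. 0)) c = B (\<lambda>i. 0) c"
    by (rule B_cong) (simp add: B_zero)
  then show ?thesis unfolding P_def using c by (simp add: B_zero)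
qed

lemma P_sum: assumes "c \<in> {1..N}" "finite J" shows "P \<alpha> \<gamma> (\<lambda>i. \<Sum>j\<in>J. f j i) c = (\<Sum>j\<in>J. P \<alpha> \<gamma> (f j) c)"
  using assms(2)
proof (induction J rule: finite_induct)
  case empty
  then show ?case using assms(1) by (simp add: P_zero)
next
  case (insert x F)
  then show ?case using P_add[OF assms(1), of \<alpha> \<gamma> "f x" "\<lambda>i. \<Sum>j\<in>F. f j i"] by simp
qed

lemma B_D: "a \<in> {1..N} \<Longrightarrow> b \<in> {1..N} \<Longrightarrow> c \<in> {1..N} \<Longrightarrow> B (D a b u) c = D a b (B u) c"
proof -
  assume a: "a \<in> {1..N}" and b: "b \<in> {1..N}" and c: "c \<in> {1..N}"
  have "B (D a b u) c = (\<Sum>i\<in>{1..N}. E i c (E a b (u i)) + (if i = a then E a c (u b) else 0))"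
    unfolding B_def D_def using c by (intro sum.cong) (auto simp: E_add E_zero)
  also have "\<dots> = (\<Sum>i\<in>{1..N}. E i c (E a b (u i))) + E a c (u b)"
    using a by (simp add: sum.distrib sum.delta)
  also have "(\<Sum>i\<in>{1..N}. E i c (E a b (u i))) = (\<Sum>i\<in>{1..N}. E a b (E i c (u i)) + ((if c = a then E i b (u i) else 0) - (if b = i then E a c (u i) else 0)))"
    using a b c by (intro sum.cong) (auto simp: comm[symmetric])
  also have "\<dots> = (\<Sum>i\<in>{1..N}. E a b (E i c (u i))) + (if c = a then (\<Sum>i\<in>{1..N}. E i b (u i)) else 0) - E a c (u b)"
    using b by (simp add: sum.distrib sum_subtractf sum.delta)
  finally have L: "B (D a b u) c = (\<Sum>i\<in>{1..N}. E a b (E i c (u i))) + (if c = a then (\<Sum>i\<in>{1..N}. E i b (u i)) else 0)"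
    by simp
  show ?thesis unfolding L unfolding D_def B_def using a b by (simp add: E_sum)
qed

lemma D_cong: "c \<in> {1..N} \<Longrightarrow> b \<in> {1..N} \<Longrightarrow> (\<And>i. i \<in> {1..N} \<Longrightarrow> u i = w i) \<Longrightarrow> D a b u c = D a b w c"
  unfolding D_def by simp

lemma P_D: assumes a: "a \<in> {1..N}" and b: "b \<in> {1..N}" and c: "c \<in> {1..N}"
  shows "P \<alpha> \<gamma> (D a b u) c = D a b (P \<alpha> \<gamma> u) c"
proof -
  have "B (B (D a b u)) c = B (D a b (B u)) c"
    by (rule B_cong) (rule B_D[OF a b])
  also have "\<dots> = D a b (B (B u)) c" using a b c by (rule B_D)
  finally have 1: "B (B (D a b u)) c = D a b (B (B u)) c" .
  show ?thesis unfolding P_def 1 B_D[OF a b c] unfolding D_def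
    using a b c by (simp add: E_add E_scale algebra_simps)
qed



definition Isum :: "'v \<Rightarrow> 'v" where "Isum x = (\<Sum>b\<in>{1..N}. E b b x)"

lemma Isum_comm: assumes i: "i \<in> {1..N}" and j: "j \<in> {1..N}" shows "Isum (E i j x) = E i j (Isum x)"
proof -
  have "Isum (E i j x) = (\<Sum>b\<in>{1..N}. E i j (E b b x) + ((if b = i then E b j x else 0) - (if j = b then E i b x else 0)))"
    unfolding Isum_def using i j by (intro sum.cong) (auto simp: comm[symmetric])
  also have "\<dots> = (\<Sum>b\<in>{1..N}. E i j (E b b x))"
    using i j by (simp add: sum.distrib sum_subtractf sum.delta)
  finally show ?thesis unfolding Isum_def using i j by (simp add: E_sum)
qed

lemma Isum_add: "Isum (x + y) = Isum x + Isum y"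
  unfolding Isum_def by (simp add: E_add sum.distrib)
lemma Isum_scale: "Isum (sc c x) = sc c (Isum x)"
  unfolding Isum_def by (simp add: E_scale scale_sum_right)
lemma Isum_zero: "Isum 0 = 0"
  unfolding Isum_def by (simp add: E_zero)

definition e :: "'v \<Rightarrow> nat \<Rightarrow> nat \<Rightarrow> 'v" where "e x j = (\<lambda>i. if i = j then x else 0)"

lemma Be: "j \<in> {1..N} \<Longrightarrow> b \<in> {1..N} \<Longrightarrow> B (e x j) b = E j b x"
proof -
  assume j: "j \<in> {1..N}" and b: "b \<in> {1..N}"
  have "B (e x j) b = (\<Sum>i\<in>{1..N}. if i = j then E j b x else 0)"
    unfolding B_def e_def using b by (intro sum.cong) (auto simp: E_zero)
  then show ?thesis using j by (simp add: sum.delta)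
qed

end

lemma split_sum: fixes m n :: nat shows "(\<Sum>i\<in>{1..m+n}. if i \<le> m then f i else (0::'a::comm_monoid_add)) = (\<Sum>i\<in>{1..m}. f i)"
proof -
  have "(\<Sum>i\<in>{1..m+n}. if i \<le> m then f i else 0) = (\<Sum>i\<in>{1..m}. if i \<le> m then f i else 0) + (\<Sum>i\<in>{m+1..m+n}. if i \<le> m then f i else 0)"
    using sum.ub_add_nat[of 1 m "\<lambda>i. if i \<le> m then f i else 0" n] by simp
  also have "(\<Sum>i\<in>{m+1..m+n}. if i \<le> m then f i else 0) = 0" by (intro sum.neutral) auto
  also have "(\<Sum>i\<in>{1..m}. if i \<le> m then f i else 0) = (\<Sum>i\<in>{1..m}. f i)" by (intro sum.cong) auto
  finally show ?thesis by simp
qed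

locale hw = glr sc "m + n" E for sc :: "complex \<Rightarrow> 'v::ab_group_add \<Rightarrow> 'v" and m n :: nat and E +
  fixes \<delta> :: int and v :: 'v
  assumes hwv: "parabolic_hw_vector sc m n E (\<lambda>i. if i \<le> m then - of_int \<delta> else 0) v"
    and gen: "generated_by sc (m + n) E v"
begin

lemma hw_diag: "i \<in> {1..m+n} \<Longrightarrow> E i i v = sc (if i \<le> m then - of_int \<delta> else 0) v"
  using hwv unfolding parabolic_hw_vector_def by blast
lemma hw_off: "i \<in> {1..m+n} \<Longrightarrow> j \<in> {1..m+n} \<Longrightarrow> i \<noteq> j \<Longrightarrow> \<not> (m < i \<and> j \<le> m) \<Longrightarrow> E i j v = 0"
  using hwv unfolding parabolic_hw_vector_def by blast

lemma span_all: "span (orbit (m+n) E v) = UNIV"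
  using gen unfolding generated_by_def by simp

lemma orbit_all:
  assumes sub: "subspace S" and base: "v \<in> S"
    and step: "\<And>x i j. x \<in> S \<Longrightarrow> i \<in> {1..m+n} \<Longrightarrow> j \<in> {1..m+n} \<Longrightarrow> E i j x \<in> S"
  shows "x \<in> S"
proof -
  have "orbit (m+n) E v \<subseteq> S"
  proof
    fix y assume "y \<in> orbit (m+n) E v"
    then show "y \<in> S" by induction (auto intro: base step)
  qed
  then have "span (orbit (m+n) E v) \<subseteq> S" using sub by (rule span_minimal)
  then show ?thesis using span_all by auto
qed

lemma Isum_v: "Isum v = sc (- (of_int \<delta> * of_nat m)) v"
proof -
  have "Isum v = (\<Sum>b\<in>{1..m+n}. sc (if b \<le> m then - of_int \<delta> else 0) v)"
    unfolding Isum_def by (intro sum.cong) (auto simp: hw_diag)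
  also have "\<dots> = sc (\<Sum>b\<in>{1..m+n}. if b \<le> m then - of_int \<delta> else 0) v"
    by (simp add: scale_sum_left)
  also have "(\<Sum>b\<in>{1..m+n}. if b \<le> m then - of_int \<delta> else (0::complex)) = - (of_int \<delta> * of_nat m)"
    by (subst split_sum) simp
  finally show ?thesis .
qed

lemma Isum_all: "Isum x = sc (- (of_int \<delta> * of_nat m)) x"
proof -
  let ?S = "{x. Isum x = sc (- (of_int \<delta> * of_nat m)) x}"
  have "subspace ?S"
    by (rule subspaceI) (auto simp: Isum_add Isum_zero Isum_scale scale_right_distrib scale_left_commute)
  moreover have "v \<in> ?S" using Isum_v by simp
  ultimately have "x \<in> ?S"
    by (rule orbit_all) (simp add: Isum_comm E_scale E_neg)
  then show ?thesis by simp
qed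


abbreviation "\<alpha> \<equiv> (of_int \<delta> + of_nat m :: complex)"
abbreviation "\<gamma> \<equiv> (of_int \<delta> * of_nat m :: complex)"

lemma coll3: "sc a x + sc b x + sc c x = sc (a + b + c) x"
  by (simp add: scale_left_distrib)

lemma K_v_low: assumes j: "j \<in> {1..m+n}" "j \<le> m" and c: "c \<in> {1..m+n}"
  shows "P \<alpha> \<gamma> (e v j) c = 0"
proof -
  let ?w = "e (sc (- of_int \<delta>) v) j"
  have w: "B (e v j) b = ?w b" if b: "b \<in> {1..m+n}" for b
    unfolding Be[OF j(1) b] unfolding e_def using j b by (auto simp: hw_diag hw_off)
  have "B (B (e v j)) c = B ?w c" by (rule B_cong) (rule w)
  also have "\<dots> = sc (- of_int \<delta>) (?w c)"
    using j c by (simp add: Be E_scale) (auto simp: e_def hw_diag hw_off E_neg E_scale)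
  finally have bb: "B (B (e v j)) c = sc (- of_int \<delta>) (?w c)" .
  show ?thesis
  proof (cases "c = j")
    case True
    have "P \<alpha> \<gamma> (e v j) c = sc (- of_int \<delta>) (sc (- of_int \<delta>) v) + sc \<alpha> (sc (- of_int \<delta>) v) + sc \<gamma> v"
      unfolding P_def bb w[OF c] using True by (simp add: e_def)
    also have "\<dots> = sc ((- of_int \<delta>) * (- of_int \<delta>) + \<alpha> * (- of_int \<delta>) + \<gamma>) v"
      by (simp only: scale_scale coll3)
    also have "(- of_int \<delta>) * (- of_int \<delta>) + \<alpha> * (- of_int \<delta>) + \<gamma> = 0"
      by (simp add: algebra_simps)
    finally show ?thesis by simp
  next
    case False
    then show ?thesis unfolding P_def bb w[OF c] by (simp add: e_def)
  qed
qed


lemma K_v_high: assumes j: "j \<in> {1..m+n}" "m < j" and c: "c \<in> {1..m+n}"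
  shows "P \<alpha> \<gamma> (e v j) c = 0"
proof -
  define w where "w = (\<lambda>b. if b \<le> m then E j b v else 0)"
  have hB: "B (e v j) b = w b" if b: "b \<in> {1..m+n}" for b
    unfolding Be[OF j(1) b] unfolding w_def using j b by (cases "b = j") (auto simp: hw_diag hw_off)
  have Ejc: "E j b v = w b" if b: "b \<in> {1..m+n}" for b
    using hB[OF b] Be[OF j(1) b] by simp
  have hterm: "E i c (w i) = (if i \<le> m then (if c = i then sc (- of_int \<delta>) (w c) else 0) + (if c = j then sc (- of_int \<delta>) v else 0) - w c else 0)"
    if i: "i \<in> {1..m+n}" for i
  proof (cases "i \<le> m")
    case True
    have Eic: "E i c v = (if c = i then sc (- of_int \<delta>) v else 0)"
      using True i c by (auto simp: hw_diag hw_off)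
    have "E i c (w i) = E j i (E i c v) + (if c = j then E i i v else 0) - E j c v"
      using comm[of i c j i v] True i c j unfolding w_def by (simp add: algebra_simps)
    also have "\<dots> = (if c = i then sc (- of_int \<delta>) (w c) else 0) + (if c = j then sc (- of_int \<delta>) v else 0) - w c"
      unfolding Eic using True i c j by (auto simp: E_scale E_neg E_zero Ejc hw_diag)
    finally show ?thesis using True by simp
  next
    case False
    then show ?thesis using i c by (simp add: w_def E_zero)
  qed
  have "B (B (e v j)) c = B w c" by (rule B_cong) (rule hB)
  also have "\<dots> = (\<Sum>i\<in>{1..m+n}. if i \<le> m then (if c = i then sc (- of_int \<delta>) (w c) else 0) + (if c = j then sc (- of_int \<delta>) v else 0) - w c else 0)"
    unfolding B_def by (intro sum.cong) (auto simp: hterm)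
  also have "\<dots> = (\<Sum>i\<in>{1..m}. (if c = i then sc (- of_int \<delta>) (w c) else 0) + (if c = j then sc (- of_int \<delta>) v else 0) - w c)"
    by (rule split_sum)
  also have "\<dots> = (\<Sum>i\<in>{1..m}. if c = i then sc (- of_int \<delta>) (w c) else 0) + sc (of_nat m) (if c = j then sc (- of_int \<delta>) v else 0) - sc (of_nat m) (w c)"
    by (simp add: sum.distrib sum_subtractf sum_constant_scale)
  also have "(\<Sum>i\<in>{1..m}. if c = i then sc (- of_int \<delta>) (w c) else 0) = sc (- of_int \<delta>) (w c)"
    using c by (auto simp: sum.delta' w_def)
  finally have bb: "B (B (e v j)) c = sc (- of_int \<delta>) (w c) + sc (of_nat m) (if c = j then sc (- of_int \<delta>) v else 0) - sc (of_nat m) (w c)" .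
  show ?thesis
  proof (cases "c = j")
    case True
    have wc: "w c = 0" using True j by (simp add: w_def)
    have "P \<alpha> \<gamma> (e v j) c = sc (of_nat m) (sc (- of_int \<delta>) v) + sc \<gamma> v"
      unfolding P_def bb hB[OF c] wc using True by (simp add: e_def)
    also have "\<dots> = sc (of_nat m * (- of_int \<delta>) + \<gamma>) v"
      by (simp only: scale_scale scale_left_distrib)
    also have "of_nat m * (- of_int \<delta>) + \<gamma> = 0"
      by (simp add: algebra_simps)
    finally show ?thesis by simp
  next
    case False
    have "P \<alpha> \<gamma> (e v j) c = sc (- of_int \<delta>) (w c) - sc (of_nat m) (w c) + sc \<alpha> (w c)"
      unfolding P_def bb hB[OF c] using False by (simp add: e_def)
    also have "\<dots> = sc ((- of_int \<delta>) - of_nat m + \<alpha>) (w c)"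
      by (simp only: scale_left_distrib scale_left_diff_distrib)
    also have "(- of_int \<delta>) - of_nat m + \<alpha> = 0"
      by (simp add: algebra_simps)
    finally show ?thesis by simp
  qed
qed


lemma K_v: "j \<in> {1..m+n} \<Longrightarrow> c \<in> {1..m+n} \<Longrightarrow> P \<alpha> \<gamma> (e v j) c = 0"
  using K_v_low K_v_high by (cases "j \<le> m") auto

lemma K_e: "j \<in> {1..m+n} \<Longrightarrow> c \<in> {1..m+n} \<Longrightarrow> P \<alpha> \<gamma> (e x j) c = 0"
proof -
  let ?W = "{x. \<forall>j\<in>{1..m+n}. \<forall>c\<in>{1..m+n}. P \<alpha> \<gamma> (e x j) c = 0}"
  have "subspace ?W"
  proof (rule subspaceI)
    show "0 \<in> ?W"
    proof -
      have "e 0 j = (\<lambda>i. 0)" for j by (auto simp: e_def)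
      then show ?thesis by (simp add: P_zero)
    qed
  next
    fix x y assume x: "x \<in> ?W" and y: "y \<in> ?W"
    have "e (x + y) j = (\<lambda>i. e x j i + e y j i)" for j by (auto simp: e_def)
    then show "x + y \<in> ?W" using x y by (simp add: P_add)
  next
    fix k x assume x: "x \<in> ?W"
    have "e (sc k x) j = (\<lambda>i. sc k (e x j i))" for j by (auto simp: e_def)
    then show "sc k x \<in> ?W" using x by (simp add: P_scale)
  qed
  moreover have "v \<in> ?W" using K_v by auto
  moreover have "E a b x \<in> ?W" if x: "x \<in> ?W" and a: "a \<in> {1..m+n}" and b: "b \<in> {1..m+n}" for x a b
  proof -
    have "P \<alpha> \<gamma> (e (E a b x) j) c = 0" if j: "j \<in> {1..m+n}" and c: "c \<in> {1..m+n}" for j c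
    proof -
      have eq: "e (E a b x) j = (\<lambda>i. D a b (e x j) i - (if b = j then e x a i else 0))"
        using a b by (auto simp: e_def D_def E_zero)
      have "P \<alpha> \<gamma> (e (E a b x) j) c = P \<alpha> \<gamma> (D a b (e x j)) c - P \<alpha> \<gamma> (\<lambda>i. if b = j then e x a i else 0) c"
        unfolding eq using c by (rule P_diff)
      also have "P \<alpha> \<gamma> (D a b (e x j)) c = 0"
        unfolding P_D[OF a b c] unfolding D_def using x a b c j by (simp add: E_zero)
      also have "P \<alpha> \<gamma> (\<lambda>i. if b = j then e x a i else 0) c = 0"
        using x a c by (cases "b = j") (auto simp: P_zero)
      finally show ?thesis by simp
    qed
    then show ?thesis by auto
  qed
  ultimately have "x \<in> ?W" by (rule orbit_all)
  then show "j \<in> {1..m+n} \<Longrightarrow> c \<in> {1..m+n} \<Longrightarrow> P \<alpha> \<gamma> (e x j) c = 0" by auto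
qed

lemma K_all: assumes c: "c \<in> {1..m+n}" shows "P \<alpha> \<gamma> u c = 0"
proof -
  have "P \<alpha> \<gamma> u c = P \<alpha> \<gamma> (\<lambda>i. \<Sum>j\<in>{1..m+n}. e (u j) j i) c"
    using c by (rule P_cong) (simp add: e_def)
  also have "\<dots> = (\<Sum>j\<in>{1..m+n}. P \<alpha> \<gamma> (e (u j) j) c)"
    using c by (rule P_sum) simp
  also have "\<dots> = 0" using c by (simp add: K_e)
  finally show ?thesis .
qed


abbreviation "hh \<equiv> (of_nat (m + n) / 2 :: complex)"
abbreviation "bt1 \<equiv> (- of_int \<delta> + of_nat (m + n) / 2 :: complex)"
abbreviation "bt2 \<equiv> ((of_nat n - of_nat m) / 2 :: complex)"

lemma y1_eq: "y1 sc (m+n) E t b j = B (\<lambda>i. t i j) b + sc hh (t b j)"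
  unfolding y1_def B_def by simp

lemma alg1: "(- sc a X - sc g Y) + sc h X + sc h (X + sc h Y) = sc (-a + h + h) X + sc (-g + h*h) Y"
  unfolding scale_left_distrib scale_right_distrib scale_scale scale_minus_left by (simp add: algebra_simps)
lemma alg2: "sc s (X + sc h Y) - sc p Y = sc s X + sc (s*h - p) Y"
  by (simp add: algebra_simps)

lemma Yrel: assumes b: "b \<in> {1..m+n}"
  shows "y1 sc (m+n) E (y1 sc (m+n) E t) b j = sc (bt1 + bt2) (y1 sc (m+n) E t b j) - sc (bt1 * bt2) (t b j)"
proof -
  let ?col = "\<lambda>i. t i j"
  let ?X = "B ?col b" and ?Y = "t b j"
  have fun_eq: "(\<lambda>i. y1 sc (m+n) E t i j) = (\<lambda>i. B ?col i + sc hh (?col i))"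
    by (simp add: y1_eq)
  have "B (\<lambda>i. B ?col i + sc hh (?col i)) b = B (B ?col) b + sc hh ?X"
    using b by (simp add: B_add B_scale)
  moreover have "B (B ?col) b = - sc \<alpha> ?X - sc \<gamma> ?Y"
    using K_all[OF b, of ?col] unfolding P_def by (simp add: eq_neg_iff_add_eq_0 add.assoc algebra_simps)
  ultimately have "y1 sc (m+n) E (y1 sc (m+n) E t) b j = (- sc \<alpha> ?X - sc \<gamma> ?Y) + sc hh ?X + sc hh (?X + sc hh ?Y)"
    by (simp add: y1_eq[of "y1 sc (m+n) E t"] fun_eq y1_eq[of t])
  also have "\<dots> = sc (- \<alpha> + hh + hh) ?X + sc (- \<gamma> + hh*hh) ?Y" by (rule alg1)
  also have "- \<alpha> + hh + hh = bt1 + bt2" by (simp add: field_simps)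
  also have "- \<gamma> + hh*hh = (bt1 + bt2) * hh - bt1 * bt2" by (simp add: field_simps)
  also have "sc (bt1 + bt2) ?X + sc ((bt1 + bt2) * hh - bt1 * bt2) ?Y = sc (bt1 + bt2) (?X + sc hh ?Y) - sc (bt1 * bt2) ?Y"
    by (rule alg2[symmetric])
  finally have fin: "y1 sc (m+n) E (y1 sc (m+n) E t) b j = sc (bt1 + bt2) (?X + sc hh ?Y) - sc (bt1 * bt2) ?Y" .
  have yt: "y1 sc (m+n) E t b j = ?X + sc hh ?Y" by (rule y1_eq)
  show ?thesis unfolding yt by (rule fin)
qed


lemma contr_rec: "tensor_contr (m+n) (y1 sc (m+n) E (y1 sc (m+n) E t))
   = sc (bt1 + bt2) (tensor_contr (m+n) (y1 sc (m+n) E t)) - sc (bt1 * bt2) (tensor_contr (m+n) t)"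
proof -
  have "tensor_contr (m+n) (y1 sc (m+n) E (y1 sc (m+n) E t))
     = (\<Sum>b\<in>{1..m+n}. sc (bt1 + bt2) (y1 sc (m+n) E t b b) - sc (bt1 * bt2) (t b b))"
    unfolding tensor_contr_def by (intro sum.cong) (auto simp: Yrel)
  then show ?thesis unfolding tensor_contr_def by (simp add: sum_subtractf scale_sum_right)
qed

definition f :: "nat \<Rightarrow> 'v \<Rightarrow> 'v" where
  "f k x = tensor_contr (m+n) ((y1 sc (m+n) E ^^ k) (tensor_emb (m+n) x))"

lemma f0: "f 0 x = sc (of_nat (m+n)) x"
proof -
  have "f 0 x = (\<Sum>b\<in>{1..m+n}. x)"
    unfolding f_def tensor_contr_def tensor_emb_def by (intro sum.cong) auto
  then show ?thesis by (simp add: sum_constant_scale)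
qed

lemma f1: "f 1 x = sc (- of_int \<delta> * of_nat m + (of_nat (m + n))\<^sup>2 / 2) x"
proof -
  have inner: "(\<Sum>i\<in>{1..m+n}. E i b (tensor_emb (m+n) x i b)) = E b b x" if b: "b \<in> {1..m+n}" for b
  proof -
    have "(\<Sum>i\<in>{1..m+n}. E i b (tensor_emb (m+n) x i b)) = (\<Sum>i\<in>{1..m+n}. if i = b then E b b x else 0)"
      unfolding tensor_emb_def using b by (intro sum.cong) (auto simp: E_zero)
    then show ?thesis using b by (simp add: sum.delta)
  qed
  have p1: "(y1 sc (m+n) E ^^ 1) = y1 sc (m+n) E" by simp
  have emb_bb: "tensor_emb (m+n) x b b = x" if "b \<in> {1..m+n}" for b
    using that by (simp add: tensor_emb_def)
  have "f 1 x = (\<Sum>b\<in>{1..m+n}. E b b x + sc hh x)"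
    unfolding f_def p1 tensor_contr_def y1_def by (intro sum.cong refl) (simp only: inner emb_bb)
  also have "\<dots> = Isum x + sc (of_nat (m+n)) (sc hh x)"
    unfolding Isum_def by (simp add: sum.distrib sum_constant_scale)
  also have "\<dots> = sc (- (of_int \<delta> * of_nat m)) x + sc (of_nat (m+n) * hh) x"
    by (simp add: Isum_all)
  also have "\<dots> = sc (- (of_int \<delta> * of_nat m) + of_nat (m+n) * hh) x"
    by (simp only: scale_left_distrib)
  also have "- (of_int \<delta> * of_nat m) + of_nat (m+n) * hh = - of_int \<delta> * of_nat m + (of_nat (m + n))\<^sup>2 / (2::complex)"
    by (simp add: power2_eq_square)
  finally show ?thesis .
qed

lemma fSS: "f (Suc (Suc k)) x = sc (bt1 + bt2) (f (Suc k) x) - sc (bt1 * bt2) (f k x)"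
  unfolding f_def by (simp add: contr_rec)

end

fun cc :: "complex \<Rightarrow> complex \<Rightarrow> complex \<Rightarrow> complex \<Rightarrow> nat \<Rightarrow> complex" where
  "cc c0 c1 s p 0 = c0"
| "cc c0 c1 s p (Suc 0) = c1"
| "cc c0 c1 s p (Suc (Suc k)) = s * cc c0 c1 s p (Suc k) - p * cc c0 c1 s p k"

context hw begin

abbreviation "ccc \<equiv> cc (of_nat (m+n)) (- of_int \<delta> * of_nat m + (of_nat (m + n))\<^sup>2 / 2) (bt1 + bt2) (bt1 * bt2)"

lemma f_cc: "(\<forall>x. f k x = sc (ccc k) x) \<and> (\<forall>x. f (Suc k) x = sc (ccc (Suc k)) x)"
proof (induction k)
  case 0
  then show ?case using f0 f1 by simp
next
  case (Suc k)
  then show ?case by (simp add: fSS scale_left_diff_distrib)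
qed

lemma omega_cc: assumes "v \<noteq> 0" shows "omega sc (m+n) E k = ccc k"
  unfolding omega_def
proof (rule the_equality)
  show "\<forall>x. tensor_contr (m + n) ((y1 sc (m + n) E ^^ k) (tensor_emb (m + n) x)) = sc (ccc k) x"
    using f_cc[of k] unfolding f_def by blast
next
  fix c assume "\<forall>x. tensor_contr (m + n) ((y1 sc (m + n) E ^^ k) (tensor_emb (m + n) x)) = sc c x"
  then have "sc c v = sc (ccc k) v" using f_cc[of k] unfolding f_def by metis
  then show "c = ccc k" using assms by simp
qed

end

theorem mainTheorem20:
  fixes sc :: "complex \<Rightarrow> 'v::ab_group_add \<Rightarrow> 'v"
    and E :: "nat \<Rightarrow> nat \<Rightarrow> 'v \<Rightarrow> 'v"
    and v :: 'v and m n :: nat and \<delta> :: int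
  assumes "m \<ge> 1" and "n \<ge> 1" and "\<delta> \<noteq> int m"
    and "gl_rep sc (m + n) E"
    and "v \<noteq> 0"
    and "parabolic_hw_vector sc m n E (\<lambda>i. if i \<le> m then - of_int \<delta> else 0) v"
    and "generated_by sc (m + n) E v"
  shows "omega sc (m + n) E 0 = of_nat (m + n)
       \<and> omega sc (m + n) E 1 = - of_int \<delta> * of_nat m + (of_nat (m + n))\<^sup>2 / 2
       \<and> (\<forall>k\<ge>2. let \<beta>1 = - of_int \<delta> + of_nat (m + n) / 2;
                    \<beta>2 = (of_nat n - of_nat m) / 2
                in omega sc (m + n) E k
                   = (\<beta>1 + \<beta>2) * omega sc (m + n) E (k - 1)
                     - \<beta>1 * \<beta>2 * omega sc (m + n) E (k - 2))"
proof -
  have G: "glr sc (m + n) E"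
    using assms(4) unfolding gl_rep_def glr_def by blast
  interpret hw sc m n E \<delta> v
    unfolding hw_def hw_axioms_def using G assms(6,7) by blast
  have om: "\<And>k. omega sc (m + n) E k = ccc k" using omega_cc[OF assms(5)] .
  have "\<forall>k\<ge>2. omega sc (m + n) E k
                   = (bt1 + bt2) * omega sc (m + n) E (k - 1) - bt1 * bt2 * omega sc (m + n) E (k - 2)"
  proof (intro allI impI)
    fix k :: nat assume "2 \<le> k"
    then obtain k' where k: "k = Suc (Suc k')" by (metis add_2_eq_Suc le_Suc_ex)
    show "omega sc (m + n) E k = (bt1 + bt2) * omega sc (m + n) E (k - 1) - bt1 * bt2 * omega sc (m + n) E (k - 2)"
      unfolding om k by simp
  qed
  then show ?thesis unfolding Let_def om by simp
qed

end
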